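(* Let $n\in\mathbb{N}$, $H\in\mathbb{R}^{n\times n}$, $W\in\mathbb{R}^{n\times n}$ with $W\succ 0$, let $C=\mathrm{diag}(C_{11},\dots,C_{nn})$ be diagonal with all $C_{ii}\neq 0$, and let $V=\mathrm{diag}(\sigma_1^2,\dots,\sigma_n^2)$ with all $\sigma_i>0$. Assume $(H,C)$ is observable and $(H,D)$ is controllable, where $W=DD^T$. Let $\Sigma$ be the unique positive semidefinite solution of the discrete algebraic Riccati equation $$\Sigma = H\Sigma H^T - H\Sigma C^T(C\Sigma C^T+V)^{-1}C\Sigma H^T + W .$$ Then $$\mathrm{tr}\,W+\frac{\sigma_u^2\,\mathrm{tr}(H^TH)\,\lambda_n(W)}{\sigma_u^2+\lambda_n(W)C_u^2}\;\le\;\mathrm{tr}\,\Sigma\;\le\;\mathrm{tr}\,W+\frac{\sigma_l^2\,\mathrm{tr}(H^TH)}{C_l^2}.$$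
   Context: This models a linear system $x(k+1)=Hx(k)+w(k)$, $w(k)\sim\mathcal N(0,W)$, whose outputs $Cx(k)$ are privatized by adding Gaussian noise $v(k)\sim\mathcal N(0,V)$ before being processed by a steady-state Kalman filter; $\Sigma$ is the steady-state a priori error covariance, and $\mathrm{tr}\,\Sigma$ equals the steady-state mean squared prediction error. For a symmetric matrix $K$, $\lambda_n(K)\le\dots\le\lambda_1(K)$ denote its eigenvalues. Indices: $l:=\arg\min_{1\le i\le n} C_{ii}^2/\sigma_i^2$ and $u:=\arg\max_{1\le i\le n} C_{ii}^2/\sigma_i^2$; $C_l:=C_{ll}$, $C_u:=C_{uu}$, and $\sigma_l,\sigma_u$ are the corresponding $\sigma_i$. Thus $\lambda_n(C^TV^{-1}C)=C_l^2/\sigma_l^2$ and $\lambda_1(C^TV^{-1}C)=C_u^2/\sigma_u^2$. *)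

theory Defs
  imports "HOL-Analysis.Analysis"
begin

definition diag_mat :: "real^'n^'n \<Rightarrow> bool" where
  "diag_mat A \<longleftrightarrow> (\<forall>i j. i \<noteq> j \<longrightarrow> A$i$j = 0)"

definition sym_mat :: "real^'n^'n \<Rightarrow> bool" where
  "sym_mat A \<longleftrightarrow> transpose A = A"

definition pos_def :: "real^'n^'n \<Rightarrow> bool" where
  "pos_def A \<longleftrightarrow> sym_mat A \<and> (\<forall>x. x \<noteq> 0 \<longrightarrow> x \<bullet> (A *v x) > 0)"

definition pos_semidef :: "real^'n^'n \<Rightarrow> bool" where
  "pos_semidef A \<longleftrightarrow> sym_mat A \<and> (\<forall>x. x \<bullet> (A *v x) \<ge> 0)"

text \<open>Smallest (real) eigenvalue lambda_n of a symmetric matrix.\<close>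
definition lambda_min :: "real^'n^'n \<Rightarrow> real" where
  "lambda_min A = Min {e. \<exists>v. v \<noteq> 0 \<and> A *v v = e *\<^sub>R v}"

text \<open>(H,C) observable: the observability matrix [C; CH; ...; CH^(n-1)] has full
  column rank n, i.e. trivial kernel.\<close>
definition observable :: "real^'n^'n \<Rightarrow> real^'n^'p \<Rightarrow> bool" where
  "observable H C \<longleftrightarrow>
     (\<forall>x. (\<forall>k < CARD('n). C *v (((*v) H ^^ k) x) = 0) \<longrightarrow> x = 0)"

text \<open>(H,D) controllable: the controllability matrix [D, HD, ..., H^(n-1) D] has full
  row rank n, i.e. its transpose has trivial kernel.\<close>
definition controllable :: "real^'n^'n \<Rightarrow> real^'m^'n \<Rightarrow> bool" where
  "controllable H D \<longleftrightarrow>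
     (\<forall>y. (\<forall>k < CARD('n). transpose D *v (((*v) (transpose H) ^^ k) y) = 0) \<longrightarrow> y = 0)"

end

theory Submission
  imports Defs
begin


lemma mat_sub_ldistrib: "(A::real^'n^'m) ** (B - C) = A ** B - A ** C"
  by (simp add: vec_eq_iff matrix_matrix_mult_def algebra_simps sum_subtractf)
lemma mat_sub_rdistrib: "((A::real^'n^'m) - B) ** C = A ** C - B ** C"
  by (simp add: vec_eq_iff matrix_matrix_mult_def algebra_simps sum_subtractf)
lemma mat_add_rdistrib: "((A::real^'n^'m) + B) ** C = A ** C + B ** C"
  by (simp add: vec_eq_iff matrix_matrix_mult_def algebra_simps sum.distrib)

lemma dot_transp: "(x::real^'m) \<bullet> ((A::real^'n^'m) *v y) = (transpose A *v x) \<bullet> y"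
  by (simp add: dot_lmul_matrix)

lemma dot_sym: "sym_mat A \<Longrightarrow> (x::real^'n) \<bullet> ((A::real^'n^'n) *v y) = (A *v x) \<bullet> y"
  by (metis dot_transp sym_mat_def)

lemma diag_mv: "diag_mat C \<Longrightarrow> ((C::real^'n^'n) *v x) $ i = C$i$i * x$i"
proof -
  assume d: "diag_mat C"
  have "(C *v x) $ i = (\<Sum>j\<in>UNIV. C$i$j * x$j)" by (simp add: matrix_vector_mult_def)
  also have "\<dots> = C$i$i * x$i"
  proof -
    have "(\<Sum>j\<in>UNIV. C$i$j * x$j) = (\<Sum>j\<in>UNIV. if j = i then C$i$i * x$i else 0)"
      by (rule sum.cong) (use d in \<open>auto simp: diag_mat_def\<close>)
    then show ?thesis by simp
  qed
  finally show ?thesis .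
qed

lemma diag_transpose: "diag_mat C \<Longrightarrow> transpose (C::real^'n^'n) = C"
  by (auto simp: diag_mat_def transpose_def vec_eq_iff) (metis)

lemma trace_HPH: "trace ((H::real^'n^'n) ** P ** transpose H) = (\<Sum>i\<in>UNIV. (H$i) \<bullet> (P *v (H$i)))"
  unfolding trace_def
  by (simp add: matrix_matrix_mult_def matrix_vector_mult_def inner_vec_def transpose_def
       sum_distrib_left sum_distrib_right mult.assoc mult.left_commute, subst sum.swap, simp)

lemma trace_HH: "trace (transpose (H::real^'n^'n) ** H) = (\<Sum>i\<in>UNIV. (H$i) \<bullet> (H$i))"
  unfolding trace_def
  by (simp add: matrix_matrix_mult_def inner_vec_def transpose_def, subst sum.swap, simp)

lemma inv_right: "invertible (M::real^'n^'n) \<Longrightarrow> M ** matrix_inv M = mat 1"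
  unfolding invertible_def matrix_inv_def by (rule someI_ex[THEN conjunct1])



lemma eig_finite:
  assumes s: "sym_mat (W::real^'n^'n)"
  shows "finite {e. \<exists>v. v \<noteq> 0 \<and> W *v v = e *\<^sub>R v}"
proof -
  define S where "S = {e. \<exists>v. v \<noteq> 0 \<and> W *v v = e *\<^sub>R v}"
  define g where "g e = (SOME v. v \<noteq> 0 \<and> W *v v = e *\<^sub>R v)" for e
  have g: "g e \<noteq> 0 \<and> W *v g e = e *\<^sub>R g e" if "e \<in> S" for e
  proof -
    have "\<exists>v. v \<noteq> 0 \<and> W *v v = e *\<^sub>R v" using that by (simp add: S_def)
    then show ?thesis unfolding g_def by (rule someI_ex)
  qed
  have orth: "g e1 \<bullet> g e2 = 0" if "e1 \<in> S" "e2 \<in> S" "e1 \<noteq> e2" for e1 e2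
  proof -
    have h1: "g e1 \<bullet> (W *v g e2) = (W *v g e1) \<bullet> g e2" by (rule dot_sym[OF s])
    have h2: "g e1 \<bullet> (W *v g e2) = e2 * (g e1 \<bullet> g e2)"
      using g[OF that(2)] by (simp only: inner_scaleR_right)
    have h3: "(W *v g e1) \<bullet> g e2 = e1 * (g e1 \<bullet> g e2)"
      using g[OF that(1)] by (simp only: inner_scaleR_left)
    have "(e2 - e1) * (g e1 \<bullet> g e2) = 0" using h1 h2 h3 by (simp only: left_diff_distrib)
    then have "e2 - e1 = 0 \<or> g e1 \<bullet> g e2 = 0" by (simp only: mult_eq_0_iff)
    moreover have "e2 - e1 \<noteq> 0" using that(3) by (metis eq_iff_diff_eq_0)
    ultimately show ?thesis by blast
  qed
  have inj: "inj_on g S"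
  proof (rule inj_onI)
    fix e1 e2 assume a: "e1 \<in> S" "e2 \<in> S" "g e1 = g e2"
    have "e1 *\<^sub>R g e1 = W *v g e1" using g[OF a(1)] by simp
    also have "\<dots> = W *v g e2" using a(3) by simp
    also have "\<dots> = e2 *\<^sub>R g e2" using g[OF a(2)] by simp
    also have "\<dots> = e2 *\<^sub>R g e1" using a(3) by simp
    finally have "e1 *\<^sub>R g e1 = e2 *\<^sub>R g e1" .
    then show "e1 = e2" using g[OF a(1)] by (simp add: scaleR_cancel_right)
  qed
  have "pairwise orthogonal (g ` S)"
    unfolding pairwise_def
  proof (intro ballI impI)
    fix x y assume "x \<in> g ` S" "y \<in> g ` S" "x \<noteq> y"
    then obtain e1 e2 where "e1 \<in> S" "e2 \<in> S" "x = g e1" "y = g e2" by (auto simp del: mem_Collect_eq)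
    then show "orthogonal x y" unfolding orthogonal_def using orth \<open>x \<noteq> y\<close> by blast
  qed
  moreover have "0 \<notin> g ` S"
  proof
    assume "0 \<in> g ` S"
    then obtain e where "e \<in> S" "0 = g e" by (auto simp del: mem_Collect_eq)
    then show False using g by metis
  qed
  ultimately have "independent (g ` S)" by (rule pairwise_orthogonal_independent)
  then have "finite (g ` S)" by (rule independent_imp_finite)
  then have "finite S" using inj by (rule finite_imageD)
  then show ?thesis by (simp add: S_def)
qed

lemma quad_zero:
  fixes a b :: real
  assumes "\<forall>t. 0 \<le> a * t + b * t^2"
  shows "a = 0"
proof (rule ccontr)
  assume a: "a \<noteq> 0"
  define B where "B = \<bar>b\<bar> + 1"
  have B: "B > 0" "b \<le> B" unfolding B_def by auto
  define s where "s = 1 / (2 * B)"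
  have s: "s > 0" "B * s = 1/2" using B unfolding s_def by auto
  define t where "t = - (a * s)"
  have e: "a * t + b * t^2 = (a^2 * s) * (b * s - 1)"
    unfolding t_def by (simp add: power2_eq_square algebra_simps)
  have "b * s \<le> B * s" using B s by (intro mult_right_mono) auto
  then have n: "b * s - 1 < 0" using s by simp
  have "a^2 * s > 0" using a s by simp
  then have "(a^2 * s) * (b * s - 1) < 0" using n by (rule mult_pos_neg)
  then show False using assms e by (metis not_le)
qed

lemma rayleigh:
  assumes s: "sym_mat (W::real^'n^'n)"
  shows "\<exists>\<mu> x0. x0 \<noteq> 0 \<and> W *v x0 = \<mu> *\<^sub>R x0 \<and> (\<forall>x. \<mu> * (x \<bullet> x) \<le> x \<bullet> (W *v x))"
proof -
  define f where "f x = x \<bullet> (W *v x)" for x :: "real^'n"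
  have cont: "continuous_on (sphere 0 1) f"
    unfolding f_def by (intro continuous_intros linear_continuous_on matrix_vector_mul_linear)
  have ne: "sphere (0::real^'n) 1 \<noteq> {}"
    by (simp add: sphere_eq_empty)
  obtain x0 where x0: "x0 \<in> sphere 0 1" and mn: "\<forall>y\<in>sphere 0 1. f x0 \<le> f y"
    using continuous_attains_inf[OF compact_sphere ne cont] by blast
  define \<mu> where "\<mu> = f x0"
  have nx0: "x0 \<bullet> x0 = 1" using x0 by (simp add: dot_square_norm)
  have bound: "\<mu> * (x \<bullet> x) \<le> f x" for x
  proof (cases "x = 0")
    case True then show ?thesis by (simp add: f_def)
  next
    case False
    define y where "y = (1 / norm x) *\<^sub>R x"
    have "y \<in> sphere 0 1" using False by (simp add: y_def)
    then have "\<mu> \<le> f y" using mn by (simp add: \<mu>_def)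
    moreover have "f y = f x / (x \<bullet> x)"
      using False by (simp add: y_def f_def matrix_vector_mult_scaleR dot_square_norm power2_eq_square)
    moreover have "x \<bullet> x > 0" using False by simp
    ultimately show ?thesis by (simp add: field_simps)
  qed
  define r where "r = W *v x0 - \<mu> *\<^sub>R x0"
  have "0 \<le> (2 * (r \<bullet> r)) * t + (f r - \<mu> * (r \<bullet> r)) * t^2" for t
  proof -
    define p where "p = r \<bullet> x0"
    define q where "q = r \<bullet> (W *v x0)"
    define rr where "rr = r \<bullet> r"
    define fr where "fr = f r"
    have "\<mu> * ((x0 + t *\<^sub>R r) \<bullet> (x0 + t *\<^sub>R r)) \<le> f (x0 + t *\<^sub>R r)" by (rule bound)
    moreover have "f (x0 + t *\<^sub>R r) = \<mu> + 2 * t * q + t^2 * fr"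
    proof -
      have sy: "x0 \<bullet> (W *v r) = q" using dot_sym[OF s, of x0 r] by (simp add: q_def inner_commute)
      have "W *v (x0 + t *\<^sub>R r) = W *v x0 + t *\<^sub>R (W *v r)"
        by (simp add: matrix_vector_right_distrib matrix_vector_mult_scaleR)
      then have "f (x0 + t *\<^sub>R r) = x0 \<bullet> (W *v x0) + t * (x0 \<bullet> (W *v r)) + t * (r \<bullet> (W *v x0)) + t * t * (r \<bullet> (W *v r))"
        unfolding f_def by (simp add: inner_add_left inner_add_right distrib_left)
      then show ?thesis unfolding sy by (simp add: \<mu>_def f_def q_def fr_def power2_eq_square)
    qed
    moreover have "(x0 + t *\<^sub>R r) \<bullet> (x0 + t *\<^sub>R r) = x0 \<bullet> x0 + t * (x0 \<bullet> r) + t * (r \<bullet> x0) + t * t * (r \<bullet> r)"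
      by (simp add: inner_add_left inner_add_right distrib_left)
    ultimately have A: "\<mu> * (1 + 2 * t * p + t^2 * rr) \<le> \<mu> + 2 * t * q + t^2 * fr"
      using nx0 by (simp add: p_def rr_def inner_commute power2_eq_square add_ac mult.assoc)
    have hq: "q - \<mu> * p = rr"
      unfolding q_def p_def rr_def by (metis r_def inner_diff_right inner_scaleR_right)
    have "2 * t * (q - \<mu> * p) + t^2 * (fr - \<mu> * rr) = (\<mu> + 2 * t * q + t^2 * fr) - \<mu> * (1 + 2 * t * p + t^2 * rr)"
      by (simp add: algebra_simps)
    then have G: "0 \<le> 2 * t * (q - \<mu> * p) + t^2 * (fr - \<mu> * rr)"
      using A by linarith
    then show ?thesis unfolding hq rr_def fr_def by (simp add: mult_ac)
  qed
  then have "2 * (r \<bullet> r) = 0" using quad_zero by blast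
  then have "r = 0" by simp
  then have "W *v x0 = \<mu> *\<^sub>R x0" by (simp add: r_def)
  moreover have "x0 \<noteq> 0" using nx0 by auto
  ultimately show ?thesis using bound unfolding f_def by blast
qed

lemma lambda_min_bound:
  assumes pd: "pos_def (W::real^'n^'n)"
  shows "0 < lambda_min W \<and> (\<forall>x. lambda_min W * (x \<bullet> x) \<le> x \<bullet> (W *v x))"
proof -
  have s: "sym_mat W" using pd by (simp add: pos_def_def)
  define S where "S = {e. \<exists>v. v \<noteq> 0 \<and> W *v v = e *\<^sub>R v}"
  have fin: "finite S" unfolding S_def by (rule eig_finite[OF s])
  obtain \<mu> x0 where mu: "x0 \<noteq> 0" "W *v x0 = \<mu> *\<^sub>R x0" "\<forall>x. \<mu> * (x \<bullet> x) \<le> x \<bullet> (W *v x)"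
    using rayleigh[OF s] by blast
  have muS: "\<mu> \<in> S" using mu unfolding S_def by blast
  have lm: "lambda_min W = Min S" unfolding lambda_min_def S_def by simp
  have le: "Min S \<le> \<mu>" using fin muS by simp
  have "Min S \<in> S" using fin muS by (intro Min_in) auto
  then obtain v where v: "v \<noteq> 0" "W *v v = Min S *\<^sub>R v" unfolding S_def by blast
  have "0 < v \<bullet> (W *v v)" using pd v(1) by (simp add: pos_def_def)
  moreover have "v \<bullet> v > 0" using v(1) by simp
  ultimately have pos: "0 < Min S" using v by (simp add: zero_less_mult_iff)
  have "Min S * (x \<bullet> x) \<le> x \<bullet> (W *v x)" for x
    using order_trans[OF mult_right_mono[OF le inner_ge_zero[of x]] mu(3)[rule_format, of x]] .
  then show ?thesis using pos lm by simp
qed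



lemma sos_ineq:
  fixes l s u w k :: real
  shows "l * s * (u + k * w)^2 \<le> (l * u^2 + s * w^2) * (s + l * k^2)"
proof -
  have "(l * u^2 + s * w^2) * (s + l * k^2) - l * s * (u + k * w)^2 = (l * k * u - s * w)^2"
    by (simp add: power2_eq_square algebra_simps)
  moreover have "(l * k * u - s * w)^2 \<ge> 0" by simp
  ultimately show ?thesis by linarith
qed

lemma coord_low:
  fixes l s su cu u w k :: real
  assumes l: "l > 0" and s: "s > 0" and su: "su > 0"
    and r: "k^2 / s \<le> cu^2 / su"
  shows "su * l / (su + l * cu^2) * (u + k * w)^2 \<le> l * u^2 + s * w^2"
proof -
  define D where "D = su + l * cu^2"
  have D: "D > 0" unfolding D_def using l su by (simp add: add_pos_nonneg)
  have Q: "0 \<le> l * u^2 + s * w^2" using l s by (simp add: add_nonneg_nonneg)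
  have r': "k^2 * su \<le> cu^2 * s" using r s su by (simp add: divide_le_eq le_divide_eq field_simps)
  have "su * (l * s * (u + k * w)^2) \<le> su * ((l * u^2 + s * w^2) * (s + l * k^2))"
    using sos_ineq su by (intro mult_left_mono) auto
  also have "\<dots> = (l * u^2 + s * w^2) * (s * su + l * (k^2 * su))" by (simp add: algebra_simps)
  also have "\<dots> \<le> (l * u^2 + s * w^2) * (s * su + l * (cu^2 * s))"
    using Q r' l by (intro mult_left_mono add_left_mono) auto
  also have "\<dots> = s * ((l * u^2 + s * w^2) * D)" by (simp add: D_def algebra_simps)
  finally have "s * (su * l * (u + k * w)^2) \<le> s * ((l * u^2 + s * w^2) * D)"
    by (simp add: algebra_simps)
  then have "su * l * (u + k * w)^2 \<le> (l * u^2 + s * w^2) * D" using s by simp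
  then show ?thesis using D unfolding D_def[symmetric] by (simp add: divide_le_eq field_simps)
qed


theorem theorem1:
  fixes H W \<Sigma> C V :: "real^'n^'n"
    and D :: "real^'m^'n"
    and \<sigma> :: "'n \<Rightarrow> real"
    and l u :: 'n
  assumes W_pd: "pos_def W"
    and C_diag: "diag_mat C" and C_nz: "\<forall>i. C$i$i \<noteq> 0"
    and V_diag: "diag_mat V" and V_entries: "\<forall>i. V$i$i = (\<sigma> i)^2" and sigma_pos: "\<forall>i. \<sigma> i > 0"
    and W_fact: "W = D ** transpose D"
    and obs: "observable H C"
    and ctrb: "controllable H D"
    and Sigma_psd: "pos_semidef \<Sigma>"
    and DARE: "\<Sigma> = H ** \<Sigma> ** transpose H
                 - H ** \<Sigma> ** transpose C ** matrix_inv (C ** \<Sigma> ** transpose C + V) ** C ** \<Sigma> ** transpose H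
                 + W"
    and l_min: "\<forall>i. (C$l$l)^2 / (\<sigma> l)^2 \<le> (C$i$i)^2 / (\<sigma> i)^2"
    and u_max: "\<forall>i. (C$i$i)^2 / (\<sigma> i)^2 \<le> (C$u$u)^2 / (\<sigma> u)^2"
  shows "trace W + (\<sigma> u)^2 * trace (transpose H ** H) * lambda_min W
            / ((\<sigma> u)^2 + lambda_min W * (C$u$u)^2) \<le> trace \<Sigma>
       \<and> trace \<Sigma> \<le> trace W + (\<sigma> l)^2 * trace (transpose H ** H) / (C$l$l)^2"
proof -
  note sig = sigma_pos
  have sS: "sym_mat \<Sigma>" and psdS: "\<And>x. 0 \<le> x \<bullet> (\<Sigma> *v x)"
    using Sigma_psd by (auto simp: pos_semidef_def)
  have sC: "sym_mat C" using diag_transpose[OF C_diag] by (simp add: sym_mat_def)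
  have CT: "transpose C = C" using diag_transpose[OF C_diag] .
  have sV: "sym_mat V" using diag_transpose[OF V_diag] by (simp add: sym_mat_def)
  have Cv: "\<And>x i. (C *v x) $ i = C$i$i * x$i" using diag_mv[OF C_diag] .
  have Vv: "\<And>x i. (V *v x) $ i = (\<sigma> i)^2 * x$i" using diag_mv[OF V_diag] V_entries by simp
  have dotC: "\<And>x y. x \<bullet> (C *v y) = (C *v x) \<bullet> y" using dot_sym[OF sC] .
  have dotS: "\<And>x y. x \<bullet> (\<Sigma> *v y) = (\<Sigma> *v x) \<bullet> y" using dot_sym[OF sS] .
  have dotV: "\<And>x y. x \<bullet> (V *v y) = (V *v x) \<bullet> y" using dot_sym[OF sV] .
  have qV: "\<And>y. y \<bullet> (V *v y) = (\<Sum>i\<in>UNIV. (\<sigma> i)^2 * (y$i)^2)"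
    by (simp add: inner_vec_def Vv power2_eq_square mult_ac)
  have qV0: "\<And>y. 0 \<le> y \<bullet> (V *v y)" unfolding qV by (intro sum_nonneg) simp
  have nrm: "\<And>x::real^'n. x \<bullet> x = (\<Sum>i\<in>UNIV. (x$i)^2)" by (simp add: inner_vec_def power2_eq_square)
  obtain lam where lam_def: "lam = lambda_min W" by blast
  have lam: "0 < lam" "\<And>x. lam * (x \<bullet> x) \<le> x \<bullet> (W *v x)"
    using lambda_min_bound[OF W_pd] lam_def by auto
  define M where "M = C ** \<Sigma> ** transpose C + V"
  have Mv: "\<And>y. M *v y = C *v (\<Sigma> *v (C *v y)) + V *v y"
    by (simp add: M_def CT matrix_vector_mult_add_rdistrib matrix_vector_mul_assoc matrix_mul_assoc)
  have yMy: "\<And>y. y \<bullet> (M *v y) = (C *v y) \<bullet> (\<Sigma> *v (C *v y)) + y \<bullet> (V *v y)"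
    by (simp add: Mv inner_add_right dotC)
  have dotM: "\<And>x y. x \<bullet> (M *v y) = (M *v x) \<bullet> y"
  proof -
    fix x y
    have "x \<bullet> (M *v y) = (C *v x) \<bullet> (\<Sigma> *v (C *v y)) + x \<bullet> (V *v y)"
      by (simp add: Mv inner_add_right dotC)
    also have "\<dots> = (\<Sigma> *v (C *v x)) \<bullet> (C *v y) + (V *v x) \<bullet> y" by (simp add: dotS dotV)
    also have "\<dots> = (C *v (\<Sigma> *v (C *v x))) \<bullet> y + (V *v x) \<bullet> y" by (simp add: dotC)
    also have "\<dots> = (M *v x) \<bullet> y" by (simp add: Mv inner_add_left)
    finally show "x \<bullet> (M *v y) = (M *v x) \<bullet> y" .
  qed
  have Mpsd: "\<And>y. 0 \<le> y \<bullet> (M *v y)" unfolding yMy using psdS qV0 by (simp add: add_nonneg_nonneg)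
  have Minj: "\<forall>y. M *v y = 0 \<longrightarrow> y = 0"
  proof (intro allI impI)
    fix y assume "M *v y = 0"
    then have "y \<bullet> (M *v y) = 0" by simp
    then have "y \<bullet> (V *v y) \<le> 0" unfolding yMy using psdS[of "C *v y"] by linarith
    then have z: "(\<Sum>i\<in>UNIV. (\<sigma> i)^2 * (y$i)^2) = 0" using qV0[of y] unfolding qV by linarith
    have "\<forall>i\<in>UNIV. (\<sigma> i)^2 * (y$i)^2 = 0"
      using sum_nonneg_eq_0_iff[of UNIV "\<lambda>i. (\<sigma> i)^2 * (y$i)^2"] z by simp
    then show "y = 0" using sig by (simp add: vec_eq_iff) (metis less_irrefl)
  qed
  have Minv: "invertible M"
    using Minj by (simp add: invertible_left_inverse matrix_left_invertible_ker)
  define Mi where "Mi = matrix_inv M"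
  have MMi: "M ** Mi = mat 1" unfolding Mi_def by (rule inv_right[OF Minv])
  define P where "P = \<Sigma> - \<Sigma> ** transpose C ** Mi ** C ** \<Sigma>"
  have DARE': "\<Sigma> = H ** P ** transpose H + W"
    using DARE unfolding P_def M_def[symmetric] Mi_def[symmetric]
    by (simp add: mat_sub_ldistrib mat_sub_rdistrib matrix_mul_assoc)
  (* the key quadratic-form facts *)
  have key: "0 \<le> x \<bullet> (P *v x) \<and>
      (\<Sum>i\<in>UNIV. (\<sigma> i)^2 * (x$i)^2 / (C$i$i)^2) \<ge> x \<bullet> (P *v x) \<and>
      ((\<forall>y. lam * (y \<bullet> y) \<le> y \<bullet> (\<Sigma> *v y)) \<longrightarrow>
        (\<Sum>i\<in>UNIV. (\<sigma> u)^2 * lam / ((\<sigma> u)^2 + lam * (C$u$u)^2) * (x$i)^2) \<le> x \<bullet> (P *v x))" for x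
  proof -
    define z where "z = C *v (\<Sigma> *v x)"
    define w where "w = Mi *v z"
    have Mw: "M *v w = z" unfolding w_def by (simp add: matrix_vector_mul_assoc MMi)
    have Px: "P *v x = \<Sigma> *v x - \<Sigma> *v (C *v w)"
      by (simp add: P_def w_def z_def CT matrix_vector_mult_diff_rdistrib matrix_vector_mul_assoc matrix_mul_assoc)
    define a where "a = x \<bullet> (\<Sigma> *v x)"
    define b where "b = z \<bullet> w"
    define c where "c = (C *v w) \<bullet> (\<Sigma> *v (C *v w))"
    define d where "d = w \<bullet> (V *v w)"
    have xPx: "x \<bullet> (P *v x) = a - b"
    proof -
      have "x \<bullet> (\<Sigma> *v (C *v w)) = b" unfolding b_def z_def using dotS dotC by metis
      then show ?thesis by (simp add: Px inner_diff_right a_def)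
    qed
    have bcd: "c + d = b"
    proof -
      have "w \<bullet> (M *v w) = c + d" unfolding yMy c_def d_def ..
      moreover have "w \<bullet> (M *v w) = b" unfolding Mw b_def by (simp add: inner_commute)
      ultimately show ?thesis by simp
    qed
    define uu where "uu = x - C *v w"
    have uSu: "uu \<bullet> (\<Sigma> *v uu) = a - 2 * b + c"
    proof -
      have e1: "x \<bullet> (\<Sigma> *v (C *v w)) = b" unfolding b_def z_def using dotS dotC by metis
      have e2: "(C *v w) \<bullet> (\<Sigma> *v x) = b" using e1 dotS by (metis inner_commute)
      show ?thesis unfolding uu_def
        by (simp add: matrix_vector_mult_diff_distrib inner_diff_left inner_diff_right e1 e2 a_def c_def)
    qed
    have joseph: "x \<bullet> (P *v x) = uu \<bullet> (\<Sigma> *v uu) + d"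
      using xPx uSu bcd by linarith
    have P0: "0 \<le> x \<bullet> (P *v x)" using joseph psdS[of uu] qV0[of w] unfolding d_def by linarith
    (* upper bound *)
    define y where "y = (\<chi> i. x$i / C$i$i)"
    have Cy: "C *v y = x" using C_nz by (simp add: vec_eq_iff Cv y_def)
    have yz: "y \<bullet> z = a" unfolding z_def a_def by (simp add: dotC Cy)
    have yMy': "y \<bullet> (M *v y) = a + (\<Sum>i\<in>UNIV. (\<sigma> i)^2 * (x$i)^2 / (C$i$i)^2)"
    proof -
      have "y \<bullet> (V *v y) = (\<Sum>i\<in>UNIV. (\<sigma> i)^2 * (x$i)^2 / (C$i$i)^2)"
        unfolding qV by (simp add: y_def power_divide)
      then show ?thesis unfolding yMy Cy a_def by simp
    qed
    have "0 \<le> (y - w) \<bullet> (M *v (y - w))" by (rule Mpsd)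
    also have "(y - w) \<bullet> (M *v (y - w)) = y \<bullet> (M *v y) - y \<bullet> (M *v w) - w \<bullet> (M *v y) + w \<bullet> (M *v w)"
      by (simp add: matrix_vector_mult_diff_distrib inner_diff_left inner_diff_right)
    also have "w \<bullet> (M *v y) = y \<bullet> (M *v w)" using dotM by (metis inner_commute)
    finally have up0: "0 \<le> y \<bullet> (M *v y) - 2 * (y \<bullet> (M *v w)) + w \<bullet> (M *v w)" by simp
    have "y \<bullet> (M *v w) = a" using Mw yz by simp
    moreover have "w \<bullet> (M *v w) = b" unfolding Mw b_def by (simp add: inner_commute)
    ultimately have UP: "x \<bullet> (P *v x) \<le> (\<Sum>i\<in>UNIV. (\<sigma> i)^2 * (x$i)^2 / (C$i$i)^2)"
      using up0 yMy' xPx by linarith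
    (* lower bound *)
    have LOW: "(\<Sum>i\<in>UNIV. (\<sigma> u)^2 * lam / ((\<sigma> u)^2 + lam * (C$u$u)^2) * (x$i)^2) \<le> x \<bullet> (P *v x)"
      if SL: "\<forall>y. lam * (y \<bullet> y) \<le> y \<bullet> (\<Sigma> *v y)"
    proof -
      have xi: "x$i = uu$i + C$i$i * w$i" for i by (simp add: uu_def Cv)
      have "(\<Sum>i\<in>UNIV. (\<sigma> u)^2 * lam / ((\<sigma> u)^2 + lam * (C$u$u)^2) * (x$i)^2)
          \<le> (\<Sum>i\<in>UNIV. lam * (uu$i)^2 + (\<sigma> i)^2 * (w$i)^2)"
      proof (rule sum_mono)
        fix i
        have r: "(C$i$i)^2 / (\<sigma> i)^2 \<le> (C$u$u)^2 / (\<sigma> u)^2" using u_max by blast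
        have "(\<sigma> u)^2 * lam / ((\<sigma> u)^2 + lam * (C$u$u)^2) * (uu$i + C$i$i * w$i)^2
            \<le> lam * (uu$i)^2 + (\<sigma> i)^2 * (w$i)^2"
          using sig[rule_format, of i] sig[rule_format, of u]
          by (intro coord_low[OF lam(1) _ _ r]) auto
        then show "(\<sigma> u)^2 * lam / ((\<sigma> u)^2 + lam * (C$u$u)^2) * (x$i)^2
            \<le> lam * (uu$i)^2 + (\<sigma> i)^2 * (w$i)^2" by (simp only: xi)
      qed
      also have "\<dots> = lam * (uu \<bullet> uu) + d"
        unfolding d_def qV nrm by (simp add: sum.distrib sum_distrib_left)
      also have "\<dots> \<le> uu \<bullet> (\<Sigma> *v uu) + d" using SL by simp
      also have "\<dots> = x \<bullet> (P *v x)" using joseph by simp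
      finally show ?thesis .
    qed
    show ?thesis using P0 UP LOW by blast
  qed
  (* Sigma \<ge> lam *)
  have SL: "\<forall>y. lam * (y \<bullet> y) \<le> y \<bullet> (\<Sigma> *v y)"
  proof
    fix y
    have "y \<bullet> (\<Sigma> *v y) = y \<bullet> ((H ** P ** transpose H) *v y) + y \<bullet> (W *v y)"
      by (subst DARE') (simp add: matrix_vector_mult_add_rdistrib inner_add_right)
    also have "y \<bullet> ((H ** P ** transpose H) *v y) = (transpose H *v y) \<bullet> (P *v (transpose H *v y))"
      by (simp add: matrix_vector_mul_assoc[symmetric] dot_transp)
    finally have "y \<bullet> (\<Sigma> *v y) = (transpose H *v y) \<bullet> (P *v (transpose H *v y)) + y \<bullet> (W *v y)" .
    moreover have "0 \<le> (transpose H *v y) \<bullet> (P *v (transpose H *v y))" using key by blast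
    ultimately show "lam * (y \<bullet> y) \<le> y \<bullet> (\<Sigma> *v y)" using lam(2)[of y] by linarith
  qed
  (* traces *)
  have trS: "trace \<Sigma> = trace W + (\<Sum>i\<in>UNIV. (H$i) \<bullet> (P *v (H$i)))"
    by (subst DARE') (simp add: trace_add trace_HPH)
  have trH: "trace (transpose H ** H) = (\<Sum>i\<in>UNIV. (H$i) \<bullet> (H$i))" by (rule trace_HH)
  define kap where "kap = (\<sigma> u)^2 * lam / ((\<sigma> u)^2 + lam * (C$u$u)^2)"
  define bet where "bet = (\<sigma> l)^2 / (C$l$l)^2"
  have bet_i: "(\<sigma> i)^2 / (C$i$i)^2 \<le> bet" for i
  proof -
    have h: "(C$l$l)^2 / (\<sigma> l)^2 \<le> (C$i$i)^2 / (\<sigma> i)^2" using l_min by blast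
    have p: "0 < (C$l$l)^2 / (\<sigma> l)^2" using C_nz[rule_format, of l] sig[rule_format, of l] by simp
    have "inverse ((C$i$i)^2 / (\<sigma> i)^2) \<le> inverse ((C$l$l)^2 / (\<sigma> l)^2)"
      by (rule le_imp_inverse_le) (use h p in auto)
    then show ?thesis by (simp add: bet_def inverse_divide)
  qed
  have lowT: "kap * trace (transpose H ** H) \<le> (\<Sum>i\<in>UNIV. (H$i) \<bullet> (P *v (H$i)))"
  proof -
    have "kap * trace (transpose H ** H) = (\<Sum>i\<in>UNIV. \<Sum>j\<in>UNIV. kap * (H$i$j)^2)"
      unfolding trH nrm by (simp add: sum_distrib_left)
    also have "\<dots> \<le> (\<Sum>i\<in>UNIV. (H$i) \<bullet> (P *v (H$i)))"
      by (rule sum_mono) (use key SL in \<open>simp add: kap_def\<close>)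
    finally show ?thesis .
  qed
  have upT: "(\<Sum>i\<in>UNIV. (H$i) \<bullet> (P *v (H$i))) \<le> bet * trace (transpose H ** H)"
  proof -
    have "(\<Sum>i\<in>UNIV. (H$i) \<bullet> (P *v (H$i))) \<le> (\<Sum>i\<in>UNIV. \<Sum>j\<in>UNIV. (\<sigma> j)^2 * (H$i$j)^2 / (C$j$j)^2)"
      by (rule sum_mono) (use key in blast)
    also have "\<dots> \<le> (\<Sum>i\<in>UNIV. \<Sum>j\<in>UNIV. bet * (H$i$j)^2)"
    proof (intro sum_mono)
      fix i j
      have "(\<sigma> j)^2 / (C$j$j)^2 * (H$i$j)^2 \<le> bet * (H$i$j)^2"
        using bet_i[of j] by (intro mult_right_mono) auto
      then show "(\<sigma> j)^2 * (H$i$j)^2 / (C$j$j)^2 \<le> bet * (H$i$j)^2" by (simp add: mult_ac)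
    qed
    also have "\<dots> = bet * trace (transpose H ** H)"
      unfolding trH nrm by (simp add: sum_distrib_left)
    finally show ?thesis .
  qed
  have D: "0 < (\<sigma> u)^2 + lam * (C$u$u)^2" using sig[rule_format, of u] lam(1) by (intro add_pos_nonneg) auto
  have e1: "(\<sigma> u)^2 * trace (transpose H ** H) * lambda_min W / ((\<sigma> u)^2 + lambda_min W * (C$u$u)^2)
      = kap * trace (transpose H ** H)" unfolding kap_def lam_def[symmetric] by (simp add: field_simps)
  have e2: "(\<sigma> l)^2 * trace (transpose H ** H) / (C$l$l)^2 = bet * trace (transpose H ** H)"
    unfolding bet_def by (simp add: field_simps)
  show ?thesis unfolding e1 e2 trS using lowT upT by linarith
qed

end
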